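(* Consider the packet spreading algorithm described in the context with any $N\ge 2$ and positive integers $K_1,\dots,K_N$. Then for every $n\in\{1,\dots,N\}$: $x_n^{K-1}=K_n$ (the output pattern of length $K$ contains exactly $K_n$ occurrences of source $n$), $\tilde Q_n^K=\frac{1}{K_n}$, and consequently $B_n^K=0$.
   Context: Packet spreading algorithm: Let $N\ge 2$, let $K_1,\dots,K_N$ be positive integers and $K=\sum_{n=1}^N K_n$. The algorithm runs iterations $k=0,1,\dots,K-1$ and maintains deficit counters $B_n^k$, $1\le n\le N$, with $B_n^0=0$ for all $n$. In iteration $k$, define the quantums $Q_n^k=\frac{(1-B_n^k)K}{K_n}$; select a source $m_k\in\arg\min_{1\le n\le N} Q_n^k$ (ties broken arbitrarily); let $Q=Q_{m_k}^k$; set $B_n^{k+1}=B_n^k+Q\frac{K_n}{K}$ for $n\neq m_k$ and $B_{m_k}^{k+1}=0$; and set the $k$-th entry of the output pattern to $P(k)=m_k$. (Thus $B_n^{K}$ is defined after the last iteration.) Normalized quantums: $\tilde Q_n^k=Q_n^k/K=(1-B_n^k)/K_n$. For $0\le k\le K-1$, $x_n^k$ denotes the number of indices $k'\in\{0,\dots,k\}$ with $m_{k'}=n$. *)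

theory Defs
  imports Main "HOL.Real"
begin

definition total_K :: "nat \<Rightarrow> (nat \<Rightarrow> nat) \<Rightarrow> nat" where
  "total_K N Kn = (\<Sum>n = 1..N. Kn n)"

definition quantum :: "nat \<Rightarrow> (nat \<Rightarrow> nat) \<Rightarrow> (nat \<Rightarrow> nat \<Rightarrow> real) \<Rightarrow> nat \<Rightarrow> nat \<Rightarrow> real" where
  "quantum N Kn B k n = (1 - B k n) * real (total_K N Kn) / real (Kn n)"

text \<open>A run of the packet spreading algorithm with arbitrary tie-breaking:
  m k is the selected source m_k (output P(k)), B k n the counter B_n^k.\<close>
definition packet_run :: "nat \<Rightarrow> (nat \<Rightarrow> nat) \<Rightarrow> (nat \<Rightarrow> nat) \<Rightarrow> (nat \<Rightarrow> nat \<Rightarrow> real) \<Rightarrow> bool" where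
  "packet_run N Kn m B \<longleftrightarrow>
     (\<forall>n\<in>{1..N}. B 0 n = 0) \<and>
     (\<forall>k < total_K N Kn.
        m k \<in> {1..N} \<and>
        (\<forall>n\<in>{1..N}. quantum N Kn B k (m k) \<le> quantum N Kn B k n) \<and>
        (\<forall>n\<in>{1..N}. B (Suc k) n =
            (if n = m k then 0
             else B k n + quantum N Kn B k (m k) * real (Kn n) / real (total_K N Kn))))"

definition count_sel :: "(nat \<Rightarrow> nat) \<Rightarrow> nat \<Rightarrow> nat \<Rightarrow> nat" where
  "count_sel m n k = card {k'. k' \<le> k \<and> m k' = n}"

end

theory Submission
  imports Defs
begin

lemma card_Suc_sel:
  "card {k'. k' < Suc k \<and> m k' = n} = card {k'. k' < k \<and> m k' = (n::nat)} + (if m k = n then 1 else 0)"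
proof -
  have fin: "finite {k'. k' < k \<and> m k' = n}" by simp
  show ?thesis
  proof (cases "m k = n")
    case True
    have "{k'. k' < Suc k \<and> m k' = n} = insert k {k'. k' < k \<and> m k' = n}"
      using True by auto
    then show ?thesis using True fin by simp
  next
    case False
    have "{k'. k' < Suc k \<and> m k' = n} = {k'. k' < k \<and> m k' = n}"
      using False less_Suc_eq by auto
    then show ?thesis using False by simp
  qed
qed

theorem mainTheorem5:
  fixes N :: nat and Kn :: "nat \<Rightarrow> nat" and m :: "nat \<Rightarrow> nat" and B :: "nat \<Rightarrow> nat \<Rightarrow> real"
  assumes "N \<ge> 2"
    and "\<forall>n\<in>{1..N}. Kn n > 0"
    and "packet_run N Kn m B"
  shows "\<forall>n\<in>{1..N}.
           count_sel m n (total_K N Kn - 1) = Kn n \<and>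
           quantum N Kn B (total_K N Kn) n / real (total_K N Kn) = 1 / real (Kn n) \<and>
           B (total_K N Kn) n = 0"
proof -
  define K where "K = total_K N Kn"
  define Q where "Q = (\<lambda>k. quantum N Kn B k (m k))"
  define c where "c = (\<lambda>k n. card {k'. k' < k \<and> m k' = n})"
  define T where "T = (\<lambda>k. \<Sum>j<k. Q j)"
  define w where "w = (\<lambda>n. real (Kn n) / real K)"
  have Knpos: "\<And>n. n \<in> {1..N} \<Longrightarrow> Kn n > 0" using assms(2) by auto
  have P0: "\<And>n. n \<in> {1..N} \<Longrightarrow> B 0 n = 0" using assms(3) unfolding packet_run_def by auto
  have Pm: "\<And>k. k < K \<Longrightarrow> m k \<in> {1..N}" using assms(3) unfolding packet_run_def K_def by auto
  have Pmin: "\<And>k n. k < K \<Longrightarrow> n \<in> {1..N} \<Longrightarrow> Q k \<le> quantum N Kn B k n"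
    using assms(3) unfolding packet_run_def K_def Q_def by auto
  have Pupd: "\<And>k n. k < K \<Longrightarrow> n \<in> {1..N} \<Longrightarrow> B (Suc k) n =
     (if n = m k then 0 else B k n + Q k * real (Kn n) / real K)"
    using assms(3) unfolding packet_run_def K_def Q_def by auto
  have qdef: "\<And>k n. quantum N Kn B k n = (1 - B k n) * real K / real (Kn n)"
    unfolding quantum_def K_def by simp
  have KgeKn: "\<And>n. n \<in> {1..N} \<Longrightarrow> Kn n \<le> K"
    unfolding K_def total_K_def by (rule member_le_sum) auto
  have Kpos: "K > 0" using KgeKn[of 1] Knpos[of 1] assms(1) by force
  have Ksum: "(\<Sum>n\<in>{1..N}. Kn n) = K" unfolding K_def total_K_def by simp
  have wsum: "(\<Sum>n\<in>{1..N}. w n) = 1"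
  proof -
    have "(\<Sum>n\<in>{1..N}. w n) = (\<Sum>n\<in>{1..N}. real (Kn n)) / real K"
      unfolding w_def by (simp add: sum_divide_distrib)
    also have "\<dots> = 1" using Ksum Kpos by (metis of_nat_sum divide_self_if of_nat_0_less_iff less_irrefl)
    finally show ?thesis .
  qed
  have cSuc: "\<And>k n. c (Suc k) n = c k n + (if m k = n then 1 else 0)"
    unfolding c_def by (rule card_Suc_sel)
  have csum: "\<And>k. k \<le> K \<Longrightarrow> (\<Sum>n\<in>{1..N}. c k n) = k"
  proof -
    fix k show "k \<le> K \<Longrightarrow> (\<Sum>n\<in>{1..N}. c k n) = k"
    proof (induction k)
      case 0 then show ?case unfolding c_def by simp
    next
      case (Suc k)
      have mk: "m k \<in> {1..N}" using Pm Suc.prems by simp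
      have "(\<Sum>n\<in>{1..N}. c (Suc k) n) = (\<Sum>n\<in>{1..N}. c k n) + (\<Sum>n\<in>{1..N}. if m k = n then 1 else 0)"
        unfolding cSuc by (simp add: sum.distrib)
      also have "\<dots> = k + 1" using Suc mk by simp
      finally show ?case by simp
    qed
  qed
  have inv: "\<And>k. k \<le> K \<Longrightarrow> (\<forall>n\<in>{1..N}. 0 \<le> B k n \<and> B k n \<le> 1 \<and> B k n = w n * T k - real (c k n))"
  proof -
    fix k show "k \<le> K \<Longrightarrow> (\<forall>n\<in>{1..N}. 0 \<le> B k n \<and> B k n \<le> 1 \<and> B k n = w n * T k - real (c k n))"
    proof (induction k)
      case 0 then show ?case using P0 unfolding T_def c_def by simp
    next
      case (Suc k)
      have kK: "k < K" using Suc.prems by simp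
      have IH: "\<forall>n\<in>{1..N}. 0 \<le> B k n \<and> B k n \<le> 1 \<and> B k n = w n * T k - real (c k n)"
        using Suc.IH Suc.prems Suc_leD by blast
      have mk: "m k \<in> {1..N}" using Pm kK by simp
      have Qeq: "Q k = (1 - B k (m k)) * real K / real (Kn (m k))" unfolding Q_def qdef by simp
      have "B k (m k) \<le> 1" using IH mk by blast
      then have Qge: "Q k \<ge> 0" unfolding Qeq by simp
      have TS: "T (Suc k) = T k + Q k" unfolding T_def by simp
      show ?case
      proof
        fix n assume n: "n \<in> {1..N}"
        show "0 \<le> B (Suc k) n \<and> B (Suc k) n \<le> 1 \<and> B (Suc k) n = w n * T (Suc k) - real (c (Suc k) n)"
        proof (cases "n = m k")
          case True
          have Kn0: "real (Kn n) > 0" using Knpos n by simp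
          have "w n * Q k = 1 - B k n" using Qeq True Kn0 Kpos unfolding w_def by (simp add: field_simps)
          moreover have "B k n = w n * T k - real (c k n)" using IH n by blast
          ultimately have "w n * T (Suc k) - real (c (Suc k) n) = 0"
            using True unfolding TS cSuc by (simp add: algebra_simps)
          then show ?thesis using Pupd[OF kK n] True by simp
        next
          case False
          have Kn0: "real (Kn n) > 0" using Knpos n by simp
          have B': "B (Suc k) n = B k n + Q k * w n" using Pupd[OF kK n] False unfolding w_def by simp
          have "Q k \<le> (1 - B k n) * real K / real (Kn n)" using Pmin[OF kK n] qdef by simp
          then have a1: "Q k * w n \<le> 1 - B k n" using Kn0 Kpos unfolding w_def by (simp add: field_simps)
          have a2: "Q k * w n \<ge> 0" using Qge unfolding w_def by simp
          have a3: "B k n = w n * T k - real (c k n)" using IH n by blast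
          have a4: "B k n \<ge> 0" using IH n by blast
          have a5: "B (Suc k) n = w n * T (Suc k) - real (c (Suc k) n)"
            using B' False a3 unfolding TS cSuc by (simp add: algebra_simps)
          show ?thesis using B' a1 a2 a4 a5 by linarith
        qed
      qed
    qed
  qed
  have Tle: "\<And>k. k < K \<Longrightarrow> T (Suc k) \<le> real K"
  proof (rule ccontr)
    fix k assume kK: "k < K" and nle: "\<not> T (Suc k) \<le> real K"
    define M where "M = m k"
    have M: "M \<in> {1..N}" using Pm kK M_def by simp
    have I1: "\<forall>n\<in>{1..N}. 0 \<le> B (Suc k) n \<and> B (Suc k) n \<le> 1 \<and> B (Suc k) n = w n * T (Suc k) - real (c (Suc k) n)"
      using inv[of "Suc k"] kK Suc_leI by blast
    have gt: "\<And>n. n \<in> {1..N} \<Longrightarrow> w n * T (Suc k) > real (Kn n)"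
    proof -
      fix n assume n: "n \<in> {1..N}"
      have "real (Kn n) > 0" using Knpos n by simp
      then show "w n * T (Suc k) > real (Kn n)" using nle Kpos unfolding w_def
        by (simp add: field_simps mult_strict_left_mono)
    qed
    have cM: "c (Suc k) M \<ge> Kn M + 1"
    proof -
      have "B (Suc k) M = 0" using Pupd[OF kK M] M_def by simp
      then have "real (c (Suc k) M) > real (Kn M)" using I1 M gt[OF M] by simp
      then show ?thesis by simp
    qed
    have cn: "\<And>n. n \<in> {1..N} - {M} \<Longrightarrow> c (Suc k) n \<ge> Kn n"
    proof -
      fix n assume n: "n \<in> {1..N} - {M}"
      then have "real (c (Suc k) n) > real (Kn n) - 1" using I1 gt[of n] by force
      then show "c (Suc k) n \<ge> Kn n" by linarith
    qed
    have "(\<Sum>n\<in>{1..N}. c (Suc k) n) = c (Suc k) M + (\<Sum>n\<in>{1..N} - {M}. c (Suc k) n)"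
      using M by (simp add: sum.remove)
    also have "\<dots> \<ge> Kn M + 1 + (\<Sum>n\<in>{1..N} - {M}. Kn n)"
    proof -
      have "(\<Sum>n\<in>{1..N} - {M}. Kn n) \<le> (\<Sum>n\<in>{1..N} - {M}. c (Suc k) n)"
        by (rule sum_mono) (rule cn)
      then show ?thesis using cM by linarith
    qed
    finally have "(\<Sum>n\<in>{1..N}. c (Suc k) n) \<ge> K + 1"
      using M Ksum by (simp add: sum.remove)
    then show False using csum[of "Suc k"] kK by simp
  qed
  have TK: "T K \<le> real K"
  proof -
    obtain k where "K = Suc k" using Kpos gr0_implies_Suc by blast
    then show ?thesis using Tle[of k] by simp
  qed
  have IK: "\<forall>n\<in>{1..N}. 0 \<le> B K n \<and> B K n \<le> 1 \<and> B K n = w n * T K - real (c K n)"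
    using inv[of K] by blast
  have "(\<Sum>n\<in>{1..N}. B K n) = (\<Sum>n\<in>{1..N}. w n * T K - real (c K n))"
    using IK by (intro sum.cong) auto
  also have "\<dots> = T K * (\<Sum>n\<in>{1..N}. w n) - real (\<Sum>n\<in>{1..N}. c K n)"
    by (simp add: sum_subtractf sum_distrib_left mult.commute)
  also have "\<dots> = T K - real K" using wsum csum[of K] by simp
  finally have sB: "(\<Sum>n\<in>{1..N}. B K n) = T K - real K" .
  have "(\<Sum>n\<in>{1..N}. B K n) \<le> 0" using sB TK by simp
  moreover have "(\<Sum>n\<in>{1..N}. B K n) \<ge> 0" by (rule sum_nonneg) (use IK in blast)
  ultimately have s0: "(\<Sum>n\<in>{1..N}. B K n) = 0" by simp
  then have B0: "\<forall>n\<in>{1..N}. B K n = 0" proof -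
    have "\<forall>n\<in>{1..N}. 0 \<le> B K n" using IK by blast
    then show ?thesis using s0 sum_nonneg_eq_0_iff[of "{1..N}" "B K"] by simp
  qed
  have TKK: "T K = real K" using s0 sB by simp
  show ?thesis unfolding K_def[symmetric]
  proof
    fix n assume n: "n \<in> {1..N}"
    have Kn0: "real (Kn n) > 0" using Knpos n by simp
    have "real (c K n) = w n * real K" using IK B0 n TKK by simp
    also have "\<dots> = real (Kn n)" unfolding w_def using Kpos by simp
    finally have cK: "c K n = Kn n" by simp
    have "{k'. k' \<le> K - 1 \<and> m k' = n} = {k'. k' < K \<and> m k' = n}" using Kpos by auto
    then have "count_sel m n (K - 1) = Kn n" using cK unfolding count_sel_def c_def by simp
    moreover have "quantum N Kn B K n / real K = 1 / real (Kn n)"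
      using B0 n Kpos unfolding qdef by simp
    ultimately show "count_sel m n (K - 1) = Kn n \<and> quantum N Kn B K n / real K = 1 / real (Kn n) \<and> B K n = 0"
      using B0 n by simp
  qed
qed

end
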